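(* Let $\alpha\in(0,1)\setminus\mathbb{Q}$. For every integer $n\geq1$, $$\min_{1\leq k\leq n}\operatorname{dist}(k\alpha,\mathbb{Z})\geq\left(2e^nE_n(\alpha)\right)^{-1}.$$
   Context: Let $\Delta^2$ be the closed unit bidisk in $\mathbb{C}^2$, $\mathcal{P}_n$ the space of polynomials $P\in\mathbb{C}[z,w]$ of total degree at most $n$, $K=\{(e^z,e^{\alpha z}):\ |z|\leq1\}$, $\|P\|_A=\sup_A|P|$, and $E_n(\alpha)=\sup\{\|P\|_{\Delta^2}:\ P\in\mathcal{P}_n,\ \|P\|_K\leq1\}$. *)

theory Defs
  imports "HOL-Analysis.Analysis"
begin

text \<open>A polynomial in C[z,w] of total degree at most n is given by its coefficient
  function c (only coefficients c i j with i + j \<le> n are used).\<close>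
definition poly2 :: "nat \<Rightarrow> (nat \<Rightarrow> nat \<Rightarrow> complex) \<Rightarrow> complex \<Rightarrow> complex \<Rightarrow> complex" where
  "poly2 n c z w = (\<Sum>(i,j)\<in>{(i,j). i + j \<le> n}. c i j * z ^ i * w ^ j)"

definition norm_bidisk :: "nat \<Rightarrow> (nat \<Rightarrow> nat \<Rightarrow> complex) \<Rightarrow> real" where
  "norm_bidisk n c = (SUP zw\<in>{(z,w). cmod z \<le> 1 \<and> cmod w \<le> 1}. cmod (poly2 n c (fst zw) (snd zw)))"

text \<open>Sup-norm on K = {(e^z, e^(alpha z)) : |z| \<le> 1}.\<close>
definition norm_K :: "real \<Rightarrow> nat \<Rightarrow> (nat \<Rightarrow> nat \<Rightarrow> complex) \<Rightarrow> real" where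
  "norm_K \<alpha> n c = (SUP z\<in>{z. cmod z \<le> 1}. cmod (poly2 n c (exp z) (exp (complex_of_real \<alpha> * z))))"

definition E :: "nat \<Rightarrow> real \<Rightarrow> real" where
  "E n \<alpha> = Sup {norm_bidisk n c | c. norm_K \<alpha> n c \<le> 1}"

definition distZ :: "real \<Rightarrow> real" where
  "distZ x = Inf {\<bar>x - of_int m\<bar> | m. True}"

end

theory Submission imports Defs "HOL-Computational_Algebra.Polynomial" begin

definition SS :: "nat \<Rightarrow> (nat \<times> nat) set" where "SS n = {(i,j). i + j \<le> n}"

lemma finite_SS: "finite (SS n)"
  by (rule finite_subset[of _ "{0..n} \<times> {0..n}"]) (auto simp: SS_def)

lemma poly2_SS: "poly2 n c z w = (\<Sum>p\<in>SS n. c (fst p) (snd p) * z ^ fst p * w ^ snd p)"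
  unfolding poly2_def SS_def by (simp add: case_prod_unfold)

lemma poly2_bound:
  assumes "cmod z \<le> R" "cmod w \<le> R" "1 \<le> R"
  shows "cmod (poly2 n c z w) \<le> (\<Sum>p\<in>SS n. cmod (c (fst p) (snd p))) * R ^ n"
proof -
  have "cmod (poly2 n c z w) \<le> (\<Sum>p\<in>SS n. cmod (c (fst p) (snd p) * z ^ fst p * w ^ snd p))"
    unfolding poly2_SS by (rule norm_sum)
  also have "\<dots> \<le> (\<Sum>p\<in>SS n. cmod (c (fst p) (snd p)) * R ^ n)"
  proof (rule sum_mono)
    fix p assume p: "p \<in> SS n"
    have "cmod z ^ fst p * cmod w ^ snd p \<le> R ^ fst p * R ^ snd p"
      by (intro mult_mono power_mono) (use assms in auto)
    also have "\<dots> = R ^ (fst p + snd p)" by (simp add: power_add)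
    also have "\<dots> \<le> R ^ n" using p assms by (intro power_increasing) (auto simp: SS_def)
    finally have "cmod z ^ fst p * cmod w ^ snd p \<le> R ^ n" .
    then show "cmod (c (fst p) (snd p) * z ^ fst p * w ^ snd p) \<le> cmod (c (fst p) (snd p)) * R ^ n"
      by (simp add: norm_mult norm_power mult.assoc mult_left_mono)
  qed
  also have "\<dots> = (\<Sum>p\<in>SS n. cmod (c (fst p) (snd p))) * R ^ n" by (simp add: sum_distrib_right)
  finally show ?thesis .
qed

lemma norm_K_ge:
  assumes "\<bar>\<alpha>\<bar> \<le> 1" "cmod z \<le> 1"
  shows "cmod (poly2 n c (exp z) (exp (complex_of_real \<alpha> * z))) \<le> norm_K \<alpha> n c"
  unfolding norm_K_def
proof (rule cSUP_upper)
  show "z \<in> {z. cmod z \<le> 1}" using assms by simp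
  have b: "cmod (exp u) \<le> exp 1" if "cmod u \<le> 1" for u
    using norm_exp[of u] that by (meson exp_le_cancel_iff order_trans)
  show "bdd_above ((\<lambda>z. cmod (poly2 n c (exp z) (exp (complex_of_real \<alpha> * z)))) ` {z. cmod z \<le> 1})"
  proof (rule bdd_aboveI2)
    fix u :: complex assume u: "u \<in> {z. cmod z \<le> 1}"
    have "cmod (complex_of_real \<alpha> * u) \<le> 1" using u assms
      by (simp add: norm_mult) (metis abs_ge_zero mult_le_one norm_ge_zero)
    then show "cmod (poly2 n c (exp u) (exp (complex_of_real \<alpha> * u))) \<le> (\<Sum>p\<in>SS n. cmod (c (fst p) (snd p))) * exp 1 ^ n"
      using u by (intro poly2_bound b) auto
  qed
qed

lemma norm_K_le:
  assumes "\<And>z. cmod z \<le> 1 \<Longrightarrow> cmod (poly2 n c (exp z) (exp (complex_of_real \<alpha> * z))) \<le> M"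
  shows "norm_K \<alpha> n c \<le> M"
  unfolding norm_K_def by (rule cSUP_least) (use assms in \<open>auto intro!: exI[of _ 0]\<close>)

lemma norm_bidisk_le: "norm_bidisk n c \<le> (\<Sum>p\<in>SS n. cmod (c (fst p) (snd p)))"
  unfolding norm_bidisk_def
proof (rule cSUP_least)
  show "{(z, w). cmod z \<le> 1 \<and> cmod w \<le> 1} \<noteq> {}" by (auto intro!: exI[of _ "0::complex"])
  fix x assume "x \<in> {(z::complex, w::complex). cmod z \<le> 1 \<and> cmod w \<le> 1}"
  then show "cmod (poly2 n c (fst x) (snd x)) \<le> (\<Sum>p\<in>SS n. cmod (c (fst p) (snd p)))"
    using poly2_bound[of "fst x" 1 "snd x" n c] by auto
qed

lemma norm_bidisk_ge:
  assumes "cmod z \<le> 1" "cmod w \<le> 1"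
  shows "cmod (poly2 n c z w) \<le> norm_bidisk n c"
proof -
  have "cmod (poly2 n c (fst (z,w)) (snd (z,w))) \<le> norm_bidisk n c"
  unfolding norm_bidisk_def
  proof (rule cSUP_upper)
  show "(z,w) \<in> {(z, w). cmod z \<le> 1 \<and> cmod w \<le> 1}" using assms by simp
  show "bdd_above ((\<lambda>zw. cmod (poly2 n c (fst zw) (snd zw))) ` {(z, w). cmod z \<le> 1 \<and> cmod w \<le> 1})"
    by (rule bdd_aboveI2[where M="(\<Sum>p\<in>SS n. cmod (c (fst p) (snd p)))"])
       (use poly2_bound[of _ 1 _ n c] in auto)
  qed
  then show ?thesis by simp
qed

lemma poly2_diff: "poly2 n (\<lambda>i j. f i j - g i j) z w = poly2 n f z w - poly2 n g z w"
  unfolding poly2_SS by (simp add: algebra_simps sum_subtractf)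

lemma poly2_mono:
  assumes "a + b \<le> n"
  shows "poly2 n (\<lambda>i j. if i = a \<and> j = b then u else 0) z w = u * z ^ a * w ^ b"
proof -
  have "poly2 n (\<lambda>i j. if i = a \<and> j = b then u else 0) z w
      = (\<Sum>p\<in>SS n. if p = (a,b) then u * z ^ a * w ^ b else 0)"
    unfolding poly2_SS by (intro sum.cong) auto
  also have "\<dots> = u * z ^ a * w ^ b" using assms finite_SS[of n]
    by (subst sum.delta) (auto simp: SS_def)
  finally show ?thesis .
qed

lemma exp_sub1: "cmod (exp u - 1) \<le> exp (cmod u) * cmod u"
proof -
  have "norm (exp u - exp 0) \<le> exp (cmod u) * norm (u - 0)"
  proof (rule field_differentiable_bound[where S="cball 0 (cmod u)" and f'=exp])
    show "convex (cball (0::complex) (cmod u))" by simp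
    fix z :: complex assume "z \<in> cball 0 (cmod u)"
    then have "cmod z \<le> cmod u" by simp
    then show "cmod (exp z) \<le> exp (cmod u)" using norm_exp[of z] by (meson exp_le_cancel_iff order_trans)
  qed (auto intro!: derivative_eq_intros)
  then show ?thesis by simp
qed

lemma lam_inj:
  assumes "\<alpha> \<notin> \<rat>"
  shows "inj_on (\<lambda>p. real (fst p) + real (snd p) * \<alpha>) A"
proof (rule inj_onI)
  fix p q :: "nat \<times> nat"
  assume eq: "real (fst p) + real (snd p) * \<alpha> = real (fst q) + real (snd q) * \<alpha>"
  show "p = q"
  proof (cases "snd p = snd q")
    case True
    then show ?thesis using eq by (simp add: prod_eq_iff)
  next
    case False
    then have ne: "real (snd p) - real (snd q) \<noteq> 0" by simp
    from eq have "\<alpha> * (real (snd p) - real (snd q)) = real (fst q) - real (fst p)"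
      by (simp add: algebra_simps)
    then have "\<alpha> = (real (fst q) - real (fst p)) / (real (snd p) - real (snd q))"
      using ne by (simp add: field_simps)
    also have "\<dots> \<in> \<rat>" by simp
    finally show ?thesis using assms by simp
  qed
qed

lemma exp_monomial:
  fixes i j r D :: nat and \<alpha> :: real
  shows "exp (complex_of_real (real r / real D)) ^ i * exp (complex_of_real \<alpha> * complex_of_real (real r / real D)) ^ j
       = exp (complex_of_real ((real i + real j * \<alpha>) / real D)) ^ r"
proof -
  have "exp (complex_of_real (real r / real D)) ^ i * exp (complex_of_real \<alpha> * complex_of_real (real r / real D)) ^ j
      = exp (of_nat i * complex_of_real (real r / real D) + of_nat j * (complex_of_real \<alpha> * complex_of_real (real r / real D)))"
    by (simp only: exp_add exp_of_nat_mult)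
  also have "\<dots> = exp (of_nat r * complex_of_real ((real i + real j * \<alpha>) / real D))"
  proof (rule arg_cong[where f=exp])
    have "real i * (real r / real D) + real j * (\<alpha> * (real r / real D)) = real r * ((real i + real j * \<alpha>) / real D)"
      by (simp add: divide_simps) (simp add: algebra_simps)
    then have "complex_of_real (real i * (real r / real D) + real j * (\<alpha> * (real r / real D))) = complex_of_real (real r * ((real i + real j * \<alpha>) / real D))"
      by simp
    then show "of_nat i * complex_of_real (real r / real D) + of_nat j * (complex_of_real \<alpha> * complex_of_real (real r / real D)) = of_nat r * complex_of_real ((real i + real j * \<alpha>) / real D)"
      by (simp only: of_real_add of_real_mult of_real_of_nat_eq)
  qed
  also have "\<dots> = exp (complex_of_real ((real i + real j * \<alpha>) / real D)) ^ r"
    by (rule exp_of_nat_mult)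
  finally show ?thesis .
qed

lemma coeff_bound:
  assumes "\<alpha> \<notin> \<rat>" "\<bar>\<alpha>\<bar> \<le> 1"
  shows "\<exists>B. \<forall>c. norm_K \<alpha> n c \<le> 1 \<longrightarrow> (\<forall>p\<in>SS n. cmod (c (fst p) (snd p)) \<le> B p)"
proof -
  define S where "S = SS n"
  define D where "D = card S"
  have finS: "finite S" unfolding S_def by (rule finite_SS)
  have "(0,0) \<in> S" by (simp add: S_def SS_def)
  then have Dpos: "D > 0" using finS by (auto simp: D_def card_gt_0_iff)
  define x where "x p = exp (complex_of_real ((real (fst p) + real (snd p) * \<alpha>) / real D))" for p :: "nat \<times> nat"
  have xinj: "x p \<noteq> x q" if "p \<noteq> q" for p q
  proof
    assume "x p = x q"
    then have "complex_of_real (exp ((real (fst p) + real (snd p) * \<alpha>) / real D)) = complex_of_real (exp ((real (fst q) + real (snd q) * \<alpha>) / real D))"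
      unfolding x_def by (simp only: exp_of_real)
    then have "(real (fst p) + real (snd p) * \<alpha>) / real D = (real (fst q) + real (snd q) * \<alpha>) / real D"
      by (simp only: of_real_eq_iff exp_inj_iff)
    then have "real (fst p) + real (snd p) * \<alpha> = real (fst q) + real (snd q) * \<alpha>"
      using Dpos by (simp add: divide_cancel_right)
    then show False using lam_inj[OF assms(1), of UNIV] that by (auto dest: inj_onD)
  qed
  define L where "L p = smult (inverse (\<Prod>q\<in>S-{p}. (x p - x q))) (\<Prod>q\<in>S-{p}. [:- x q, 1:])" for p
  have Lval: "poly (L p) (x q) = (if q = p then 1 else 0)" if "p \<in> S" "q \<in> S" for p q
  proof (cases "q = p")
    case True
    have "\<forall>q\<in>S-{p}. x p - x q \<noteq> 0" using xinj by (metis DiffE eq_iff_diff_eq_0 singletonI)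
    then have "(\<Prod>q\<in>S-{p}. (x p - x q)) \<noteq> 0" using finS by (simp add: prod_zero_iff)
    then show ?thesis using True by (simp add: L_def poly_prod)
  next
    case False
    have "(\<Prod>r\<in>S-{p}. (x q - x r)) = 0" using finS False that by (auto simp: prod_zero_iff)
    then show ?thesis using False by (simp add: L_def poly_prod)
  qed
  have Ldeg: "degree (L p) < D" if "p \<in> S" for p
  proof -
    have "degree (L p) \<le> degree (\<Prod>q\<in>S-{p}. [:- x q, 1:])" unfolding L_def by (rule degree_smult_le)
    also have "\<dots> \<le> card (S - {p})" using degree_prod_sum_le[of "S-{p}" "\<lambda>q. [:- x q, 1:]"] finS by (simp add: o_def)
    also have "\<dots> < D" using that finS Dpos by (simp add: D_def)
    finally show ?thesis .
  qed
  have Lpoly: "poly (L p) y = (\<Sum>r<D. coeff (L p) r * y ^ r)" if "p \<in> S" for p y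
  proof -
    have "poly (L p) y = (\<Sum>r\<le>degree (L p). coeff (L p) r * y ^ r)" by (rule poly_altdef)
    also have "\<dots> = (\<Sum>r<D. coeff (L p) r * y ^ r)"
      using Ldeg[OF that] by (intro sum.mono_neutral_left) (auto simp: coeff_eq_0)
    finally show ?thesis .
  qed
  define B where "B p = (\<Sum>r<D. cmod (coeff (L p) r))" for p
  show ?thesis
  proof (intro exI[of _ B] allI impI ballI)
    fix c p assume cK: "norm_K \<alpha> n c \<le> 1" and pS: "p \<in> SS n"
    then have p: "p \<in> S" by (simp add: S_def)
    define y where "y r = poly2 n c (exp (complex_of_real (real r / real D))) (exp (complex_of_real \<alpha> * complex_of_real (real r / real D)))" for r :: nat
    have yb: "cmod (y r) \<le> 1" if "r < D" for r
    proof -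
      have "real r / real D \<le> 1" using that Dpos by simp
      then have "cmod (complex_of_real (real r / real D)) \<le> 1" by (simp only: norm_of_real) simp
      then show ?thesis unfolding y_def using norm_K_ge[OF assms(2)] cK by (meson order_trans)
    qed
    have yx: "y r = (\<Sum>q\<in>S. c (fst q) (snd q) * x q ^ r)" for r
      unfolding y_def poly2_SS S_def x_def by (intro sum.cong refl) (simp only: mult.assoc exp_monomial)
    have "c (fst p) (snd p) = (\<Sum>q\<in>S. c (fst q) (snd q) * poly (L p) (x q))"
      using finS p by (simp add: Lval if_distrib cong: if_cong) 
    also have "\<dots> = (\<Sum>q\<in>S. \<Sum>r<D. coeff (L p) r * (c (fst q) (snd q) * x q ^ r))"
      using p by (simp add: Lpoly sum_distrib_left algebra_simps)
    also have "\<dots> = (\<Sum>r<D. coeff (L p) r * y r)"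
      by (subst sum.swap) (simp add: yx sum_distrib_left)
    finally have "cmod (c (fst p) (snd p)) \<le> (\<Sum>r<D. cmod (coeff (L p) r * y r))"
      by (metis norm_sum)
    also have "\<dots> \<le> (\<Sum>r<D. cmod (coeff (L p) r))"
      by (intro sum_mono) (use yb in \<open>auto simp: norm_mult intro: mult_left_le\<close>)
    finally show "cmod (c (fst p) (snd p)) \<le> B p" by (simp add: B_def)
  qed
qed

lemma E_bdd:
  assumes "\<alpha> \<notin> \<rat>" "\<bar>\<alpha>\<bar> \<le> 1"
  shows "bdd_above {norm_bidisk n c | c. norm_K \<alpha> n c \<le> 1}"
proof -
  obtain B where B: "\<And>c p. norm_K \<alpha> n c \<le> 1 \<Longrightarrow> p \<in> SS n \<Longrightarrow> cmod (c (fst p) (snd p)) \<le> B p"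
    using coeff_bound[OF assms, of n] by blast
  show ?thesis
  proof (rule bdd_aboveI)
    fix y assume "y \<in> {norm_bidisk n c | c. norm_K \<alpha> n c \<le> 1}"
    then obtain c where y: "y = norm_bidisk n c" and c: "norm_K \<alpha> n c \<le> 1" by blast
    have "y \<le> (\<Sum>p\<in>SS n. cmod (c (fst p) (snd p)))" unfolding y by (rule norm_bidisk_le)
    also have "\<dots> \<le> (\<Sum>p\<in>SS n. B p)" by (intro sum_mono B c)
    finally show "y \<le> (\<Sum>p\<in>SS n. B p)" .
  qed
qed

lemma distZ_ge: "distZ x \<ge> \<bar>x - of_int (round x)\<bar>"
  unfolding distZ_def
proof (rule cInf_greatest)
  show "{\<bar>x - of_int m\<bar> |m. True} \<noteq> {}" by auto
  fix y assume "y \<in> {\<bar>x - of_int m\<bar> |m. True}"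
  then obtain m where y: "y = \<bar>x - of_int m\<bar>" by blast
  show "\<bar>x - of_int (round x)\<bar> \<le> y"
  proof (cases "\<bar>x - of_int m\<bar> < 1/2")
    case True
    then have "round x = m" by (rule round_unique')
    then show ?thesis using y by simp
  next
    case False
    then show ?thesis using y of_int_round_abs_le[of x] by linarith
  qed
qed

theorem corollary1:
  fixes \<alpha> :: real and n :: nat
  assumes "0 < \<alpha>" "\<alpha> < 1" "\<alpha> \<notin> \<rat>" "n \<ge> 1"
  shows "Min ((\<lambda>k. distZ (real k * \<alpha>)) ` {1..n}) \<ge> inverse (2 * exp (real n) * E n \<alpha>)"
proof -
  have a1: "\<bar>\<alpha>\<bar> \<le> 1" using assms by simp
  have "inverse (2 * exp (real n) * E n \<alpha>) \<le> distZ (real k * \<alpha>)" if k: "k \<in> {1..n}" for k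
  proof -
    define x where "x = real k * \<alpha>"
    define m where "m = round x"
    define d where "d = x - of_int m"
    define \<delta> where "\<delta> = \<bar>d\<bar>"
    have kpos: "k \<ge> 1" "k \<le> n" using k by auto
    have \<delta>le: "\<delta> \<le> 1/2" using of_int_round_abs_le[of x] by (simp add: \<delta>_def d_def m_def abs_minus_commute)
    have \<delta>pos: "\<delta> > 0"
    proof (rule ccontr)
      assume "\<not> \<delta> > 0"
      then have "x = of_int m" by (simp add: \<delta>_def d_def)
      then have "\<alpha> = of_int m / real k" using kpos by (simp add: x_def field_simps)
      also have "\<dots> \<in> \<rat>" by simp
      finally show False using assms by simp
    qed
    have xpos: "0 < x" "x < real k" using assms kpos by (auto simp: x_def)
    have "real_of_int m > -1" using of_int_round_abs_le[of x] xpos unfolding m_def by linarith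
    then have m0: "m \<ge> 0" by simp
    have mk: "of_int m \<le> x + 1/2" using of_int_round_abs_le[of x] unfolding m_def by linarith
    define mn where "mn = nat m"
    have mn: "real mn = of_int m" using m0 by (simp add: mn_def)
    have mnk: "real mn + \<delta> \<le> real n + 1" using mn mk xpos \<delta>le kpos by linarith
    have mnn: "mn \<le> n" using mnk \<delta>pos by linarith
    define M where "M = exp (real n + 1) * \<delta>"
    have Mpos: "M > 0" using \<delta>pos by (simp add: M_def)
    define c where "c i j = (if i = 0 \<and> j = k then complex_of_real (1/M) else 0) - (if i = mn \<and> j = 0 then complex_of_real (1/M) else 0)" for i j
    have pc: "poly2 n c z w = complex_of_real (1/M) * (w ^ k - z ^ mn)" for z w
      unfolding c_def poly2_diff using kpos mnn by (simp add: poly2_mono algebra_simps)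
    have cK: "norm_K \<alpha> n c \<le> 1"
    proof (rule norm_K_le)
      fix z :: complex assume z: "cmod z \<le> 1"
      have "exp (complex_of_real \<alpha> * z) ^ k = exp (of_nat k * (complex_of_real \<alpha> * z))"
        by (simp only: exp_of_nat_mult)
      also have "of_nat k * (complex_of_real \<alpha> * z) = of_nat mn * z + complex_of_real d * z"
      proof -
        have "real k * \<alpha> = real mn + d" using mn by (simp add: d_def x_def)
        then have "complex_of_real (real k * \<alpha>) = complex_of_real (real mn + d)" by simp
        then have "of_nat k * complex_of_real \<alpha> = of_nat mn + complex_of_real d" by simp
        then show ?thesis by (simp add: algebra_simps flip: distrib_right)
      qed
      finally have e1: "exp (complex_of_real \<alpha> * z) ^ k = exp (of_nat mn * z) * exp (complex_of_real d * z)"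
        by (simp only: exp_add)
      have e0: "exp (of_nat mn * z) = exp z ^ mn" by (rule exp_of_nat_mult)
      have e: "exp (complex_of_real \<alpha> * z) ^ k - exp z ^ mn = exp (of_nat mn * z) * (exp (complex_of_real d * z) - 1)"
        unfolding e0[symmetric] e1 by (simp add: right_diff_distrib)
      have b1: "cmod (exp (of_nat mn * z)) \<le> exp (real mn)"
      proof -
        have "cmod (of_nat mn * z) \<le> real mn" using z by (simp add: norm_mult mult_left_le)
        then show ?thesis using norm_exp[of "of_nat mn * z"] by (meson exp_le_cancel_iff order_trans)
      qed
      have dz: "cmod (complex_of_real d * z) \<le> \<delta>" using z \<delta>pos by (simp add: norm_mult \<delta>_def mult_left_le)
      have b2: "cmod (exp (complex_of_real d * z) - 1) \<le> exp \<delta> * \<delta>"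
        using exp_sub1[of "complex_of_real d * z"] dz
        by (meson exp_ge_zero exp_le_cancel_iff mult_mono norm_ge_zero order_trans)
      have "cmod (exp (complex_of_real \<alpha> * z) ^ k - exp z ^ mn) \<le> exp (real mn) * (exp \<delta> * \<delta>)"
        unfolding e norm_mult by (intro mult_mono b1 b2) auto
      also have "\<dots> = exp (real mn + \<delta>) * \<delta>" by (simp add: exp_add)
      also have "\<dots> \<le> M" unfolding M_def using mnk \<delta>pos by (intro mult_right_mono) auto
      finally have "cmod (exp (complex_of_real \<alpha> * z) ^ k - exp z ^ mn) \<le> M" .
      then show "cmod (poly2 n c (exp z) (exp (complex_of_real \<alpha> * z))) \<le> 1"
        using Mpos by (simp add: pc norm_mult norm_divide divide_le_eq)
    qed
    define w0 where "w0 = exp (\<i> * complex_of_real (pi / real k))"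
    have w0k: "w0 ^ k = -1"
    proof -
      have "w0 ^ k = exp (of_nat k * (\<i> * complex_of_real (pi / real k)))" unfolding w0_def by (simp only: exp_of_nat_mult)
      also have "of_nat k * (\<i> * complex_of_real (pi / real k)) = \<i> * pi" using kpos by (simp add: field_simps)
      finally show ?thesis by simp
    qed
    have w0n: "cmod w0 = 1" unfolding w0_def by simp
    have "2 / M = cmod (poly2 n c 1 w0)" using Mpos by (simp add: pc w0k norm_mult norm_divide)
    also have "\<dots> \<le> norm_bidisk n c" using w0n by (intro norm_bidisk_ge) auto
    also have "\<dots> \<le> E n \<alpha>" unfolding E_def
      by (rule cSup_upper) (use cK E_bdd[OF assms(3) a1, of n] in auto)
    finally have EM: "2 / M \<le> E n \<alpha>" .
    have "inverse (2 * exp (real n) * E n \<alpha>) \<le> inverse (2 * exp (real n) * (2 / M))"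
      using EM Mpos by (intro le_imp_inverse_le mult_left_mono) auto
    also have "\<dots> = exp 1 * \<delta> / 4" using Mpos by (simp add: M_def exp_add field_simps)
    also have "\<dots> \<le> \<delta>" using exp_le \<delta>pos by simp
    also have "\<dots> \<le> distZ (real k * \<alpha>)" using distZ_ge[of x] by (simp add: \<delta>_def d_def m_def x_def)
    finally show ?thesis .
  qed
  then show ?thesis using assms(4) by (subst Min_ge_iff) auto
qed

end
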